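(* For every positive integer $n$, the set $\overline{\mathcal{H}}_{n}=\{\gamma\in\mathcal{H}_{n}\mid \pi(\gamma)\in\mathcal{H}_{n-1}\}$ is not empty.
   Context: For a positive integer $n$ and $\gamma=(\gamma_1,\ldots,\gamma_n)\in\mathbb{R}^n$, let $P_\gamma(s)=s^n+\sum_{k=1}^{n}\gamma_k s^{n-k}$. A polynomial is called Hurwitz if all its roots have strictly negative real part. Let $\mathcal{H}_n=\{\gamma\in\mathbb{R}^n\mid P_\gamma \text{ is Hurwitz}\}$. Let $\pi:\mathbb{R}^n\to\mathbb{R}^{n-1}$ be the projection $\pi(\gamma)=(\gamma_1,\ldots,\gamma_{n-1})$, so that $P_{\pi(\gamma)}(s)=s^{n-1}+\sum_{k=1}^{n-1}\gamma_k s^{n-1-k}$. (For $n=1$, $\mathbb{R}^0$ is a point, $P_{\pi(\gamma)}=1$ has no roots and is regarded as Hurwitz, so $\mathcal{H}_0=\mathbb{R}^0$.) *)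

theory Defs
  imports "HOL-Computational_Algebra.Polynomial" Complex_Main
begin

text \<open>A coefficient vector gamma = (gamma_1,...,gamma_n) in R^n is represented as a real list
  of length n, with gamma_k = gs ! (k - 1).\<close>

definition P_gamma :: "real list \<Rightarrow> real poly" where
  "P_gamma gs = monom 1 (length gs) +
     (\<Sum>k\<in>{1..length gs}. monom (gs ! (k - 1)) (length gs - k))"

definition hurwitz :: "real poly \<Rightarrow> bool" where
  "hurwitz p \<longleftrightarrow> (\<forall>z::complex. poly (map_poly complex_of_real p) z = 0 \<longrightarrow> Re z < 0)"

definition Hurwitz_set :: "nat \<Rightarrow> real list set" where
  "Hurwitz_set n = {gs. length gs = n \<and> hurwitz (P_gamma gs)}"

definition proj :: "real list \<Rightarrow> real list" where
  "proj gs = take (length gs - 1) gs"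

end

theory Submission
  imports Defs
begin

lemma mp_add: "map_poly complex_of_real (p + q) = map_poly complex_of_real p + map_poly complex_of_real q"
  by (intro poly_eqI) (simp add: coeff_map_poly)

lemma mp_sum: "map_poly complex_of_real (sum f A) = (\<Sum>x\<in>A. map_poly complex_of_real (f x))"
  by (induction A rule: infinite_finite_induct) (auto simp: mp_add)

lemma evalP: "poly (map_poly complex_of_real (P_gamma gs)) z =
   z ^ length gs + (\<Sum>k\<in>{1..length gs}. complex_of_real (gs!(k-1)) * z ^ (length gs - k))"
  unfolding P_gamma_def
  by (simp add: mp_add mp_sum map_poly_monom poly_monom poly_sum)

theorem lemma1:
  fixes n :: nat
  assumes "n \<ge> 1"
  shows "{gs \<in> Hurwitz_set n. proj gs \<in> Hurwitz_set (n - 1)} \<noteq> {}"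
proof -
  define gs where "gs = map (\<lambda>k. real (n choose Suc k)) [0..<n]"
  have lg: "length gs = n" by (simp add: gs_def)
  have pg: "proj gs = map (\<lambda>k. real (n choose Suc k)) [0..<n-1]"
    by (simp add: gs_def proj_def take_map)
  have full: "poly (map_poly complex_of_real (P_gamma gs)) z = (z+1)^n" for z
  proof -
    have "poly (map_poly complex_of_real (P_gamma gs)) z =
       z ^ n + (\<Sum>k\<in>{1..n}. of_nat (n choose k) * z ^ (n - k))"
      unfolding evalP lg by (intro arg_cong2[where f="(+)"] refl sum.cong) (auto simp: gs_def)
    also have "\<dots> = (\<Sum>k\<le>n. of_nat (n choose k) * z ^ (n - k))"
      by (simp add: atMost_atLeast0 sum.atLeast_Suc_atMost)
    also have "\<dots> = (z+1)^n"
      using binomial_ring[of 1 z n] by (simp add: add.commute)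
    finally show ?thesis .
  qed
  have part: "z * poly (map_poly complex_of_real (P_gamma (proj gs))) z = (z+1)^n - 1" for z
  proof -
    have lp: "length (proj gs) = n - 1" by (simp add: pg)
    have "poly (map_poly complex_of_real (P_gamma (proj gs))) z =
       z ^ (n-1) + (\<Sum>k\<in>{1..n-1}. of_nat (n choose k) * z ^ (n - 1 - k))"
      unfolding evalP lp by (intro arg_cong2[where f="(+)"] refl sum.cong) (auto simp: pg)
    note pe = this
    have a: "z * z^(n-1) = z^n" using assms by (cases n) auto
    have b: "z * (\<Sum>k\<in>{1..n-1}. of_nat (n choose k) * z ^ (n - 1 - k)) =
          (\<Sum>k\<in>{1..n-1}. of_nat (n choose k) * z ^ (n - k))"
      unfolding sum_distrib_left
    proof (rule sum.cong)
      fix k assume "k \<in> {1..n-1}"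
      hence "n - k = Suc (n - 1 - k)" by auto
      thus "z * (of_nat (n choose k) * z ^ (n - 1 - k)) = of_nat (n choose k) * z ^ (n - k)"
        by simp
    qed simp
    have "z * poly (map_poly complex_of_real (P_gamma (proj gs))) z =
       z ^ n + (\<Sum>k\<in>{1..n-1}. of_nat (n choose k) * z ^ (n - k))"
      unfolding pe distrib_left a b ..
    also have "\<dots> = (\<Sum>k\<le>n. of_nat (n choose k) * z ^ (n - k)) - 1"
    proof -
      have fin: "finite {1..n-1}" by simp
      have "{..n} = insert n (insert 0 {1..n-1})" using assms by auto
      hence "(\<Sum>k\<le>n. of_nat (n choose k) * z ^ (n - k)) =
          1 + (z^n + (\<Sum>k\<in>{1..n-1}. of_nat (n choose k) * z ^ (n - k)))"
        using assms by (simp only: sum.insert fin finite_insert) (auto)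
      thus ?thesis by simp
    qed
    also have "\<dots> = (z+1)^n - 1"
      using binomial_ring[of 1 z n] by (simp add: add.commute)
    finally show ?thesis .
  qed
  have h1: "hurwitz (P_gamma gs)"
    unfolding hurwitz_def full
  proof (intro allI impI)
    fix z :: complex assume "(z+1)^n = 0"
    hence "z = -1" by (simp add: add_eq_0_iff2)
    thus "Re z < 0" by simp
  qed
  have h2: "hurwitz (P_gamma (proj gs))"
    unfolding hurwitz_def
  proof (intro allI impI)
    fix z :: complex assume q: "poly (map_poly complex_of_real (P_gamma (proj gs))) z = 0"
    have e: "(z+1)^n = 1" using part[of z] q by simp
    have "z \<noteq> 0"
    proof
      assume "z = 0"
      hence "poly (map_poly complex_of_real (P_gamma (proj gs))) 0 = 0" using q by simp
      moreover have "poly (map_poly complex_of_real (P_gamma (proj gs))) 0 = of_nat n"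
      proof -
        have lp: "length (proj gs) = n - 1" by (simp add: pg)
        show ?thesis
        proof (cases "n = 1")
          case True thus ?thesis by (simp add: evalP lp)
        next
          case False
          have c: "(n choose (n-1)) = n" using assms
            using binomial_symmetric[of 1 n] by simp
          have "(\<Sum>k\<in>{1..n-1}. complex_of_real (proj gs ! (k-1)) * 0 ^ (n - 1 - k))
               = (\<Sum>k\<in>{1..n-1}. if k = n-1 then of_nat (n choose (n-1)) else 0)"
            using False assms by (intro sum.cong) (auto simp: pg nth_map Suc_diff_Suc)
          also have "\<dots> = of_nat n" using False assms c by simp
          finally show ?thesis using False assms by (simp add: evalP lp)
        qed
      qed
      ultimately show False using assms by simp
    qed
    have "norm (z+1) = 1"
    proof -
      have "norm (z+1) ^ n = 1" using arg_cong[OF e, of norm] by (simp add: norm_power)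
      thus ?thesis using assms power_eq_imp_eq_base[of "norm (z+1)" n 1] by simp
    qed
    hence "(Re z + 1)^2 + (Im z)^2 = 1"
      by (simp add: cmod_def)
    hence "(Re z + 1)^2 \<le> 1^2" using zero_le_power2[of "Im z"] by (simp only: power_one)
    hence "\<bar>Re z + 1\<bar> \<le> \<bar>1\<bar>" by (simp only: abs_le_square_iff)
    hence "Re z \<le> 0" by simp
    moreover have "Re z \<noteq> 0"
    proof
      assume "Re z = 0"
      with \<open>(Re z + 1)^2 + (Im z)^2 = 1\<close> have "(Im z)^2 = 0" by simp
      hence "Im z = 0" by simp
      with \<open>Re z = 0\<close> \<open>z \<noteq> 0\<close> show False by (simp add: complex_eq_iff)
    qed
    ultimately show "Re z < 0" by simp
  qed
  have "gs \<in> {gs \<in> Hurwitz_set n. proj gs \<in> Hurwitz_set (n - 1)}"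
    using h1 h2 lg by (simp add: Hurwitz_set_def pg)
  thus ?thesis by blast
qed

end
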